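(* Assume $\gcd(l,m)=1$, let $\mathcal G(\boldsymbol\nu,\boldsymbol\rho)$ be the regular $\boldsymbol\nu$-graph of the construction (with the unique $u_r,v_r$ making each $\mathcal A_r^t$ of slope $\alpha_{r+1}$ and each $\mathcal B_r^t$ of slope $-\beta_{r+1}$). Put $\Omega=\max_{1\le i\le l,\,1\le j\le m}(\alpha_i+\beta_j)$ and $\omega=\min_{1\le i\le l,\,1\le j\le m}(\alpha_i+\beta_j)$, and assume $\omega>0$. If $$\frac{\psi_r^n+1}{\psi_r^l+\psi_r^m}\ge\frac{\Omega}{\omega}\quad\text{for every }r\in\{0,\dots,k-1\},$$ then $v_r\ge u_r$ for all $0\le r<k$, and $\mathcal G(\boldsymbol\nu,\boldsymbol\rho)$ is proper.
   Context: Setting: $l,m$ positive integers, $n=l+m$, $k=\operatorname{lcm}(l,m)$, weights $\alpha_1,\dots,\alpha_l,\beta_1,\dots,\beta_m\ge0$ not all zero with $\sum\alpha_i=\sum\beta_j$, $\boldsymbol\nu=(\alpha_1,\dots,\alpha_l,-\beta_1,\dots,-\beta_m)$, $\boldsymbol\rho=(\rho_1,\dots,\rho_k)$ with all $\rho_i>1$. Indexing: for integer $r$, $\alpha_r:=\alpha_i$ ($1\le i\le l$, $r\equiv i\bmod l$), $\beta_r:=\beta_j$ ($1\le j\le m$, $r\equiv j\bmod m$), $\rho_r:=\rho_h$ ($1\le h\le k$, $r\equiv h\bmod k$); $u_r,v_r$ extended $k$-periodically. $\sigma_0=1$, $\sigma_r=\rho_1\cdots\rho_r$ ($1\le r\le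 k$), $\tau=\rho_1\cdots\rho_k$, $\sigma_{sk+h}=\tau^s\sigma_h$ ($s\in\mathbb Z$, $0\le h<k$); $\psi_r^s=\rho_{r+1}\cdots\rho_{r+s}$. Points ${\bf a}_r^t=\tau^t\sigma_r(1,u_r)$, ${\bf b}_r^t=\tau^t\sigma_r(1,v_r)$; segments $\mathcal A_r^t=[{\bf a}_r^t,{\bf b}_{r+l}^t]$, $\mathcal B_r^t=[{\bf b}_r^t,{\bf a}_{r+m}^t]$ ($0\le r<k$, $t\in\mathbb Z$); $\mathcal G(\boldsymbol\nu,\boldsymbol\rho)=\{{\bf 0}\}\cup\bigcup_{t,r}(\mathcal A_r^t\cup\mathcal B_r^t)$, which is the union of the graphs of functions $P_1\le\dots\le P_n$ on $[0,\infty)$. Such a system (graph) is proper if for each $q>0$ and each $i$ with $1\le i<n$ and $P_i(q)<P_{i+1}(q)$, the sum of the slopes of $P_1,\dots,P_i$ immediately to the left of $q$ does not exceed the sum of the slopes of $P_1,\dots,P_i$ immediately to the right of $q$. *)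

theory Defs
  imports "HOL-Analysis.Analysis"
begin

text \<open>Periodic extension of a 1-based family f_1..f_p to all integer indices:
  f_r := f_i with 1 \<le> i \<le> p and r \<equiv> i mod p.\<close>
definition ext1 :: "nat \<Rightarrow> (nat \<Rightarrow> real) \<Rightarrow> int \<Rightarrow> real" where
  "ext1 p f r = f (nat ((r - 1) mod int p) + 1)"

definition ext0 :: "nat \<Rightarrow> (nat \<Rightarrow> real) \<Rightarrow> int \<Rightarrow> real" where
  "ext0 p f r = f (nat (r mod int p))"

definition tau :: "nat \<Rightarrow> (nat \<Rightarrow> real) \<Rightarrow> real" where
  "tau k rho = (\<Prod>h=1..k. rho h)"

definition sig :: "nat \<Rightarrow> (nat \<Rightarrow> real) \<Rightarrow> int \<Rightarrow> real" where
  "sig k rho r = tau k rho powi (r div int k) * (\<Prod>h=1..nat (r mod int k). rho h)"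

definition psi :: "nat \<Rightarrow> (nat \<Rightarrow> real) \<Rightarrow> int \<Rightarrow> nat \<Rightarrow> real" where
  "psi k rho r s = (\<Prod>j=1..s. ext1 k rho (r + int j))"

text \<open>Points a_R = sigma_R (1, u_R), b_R = sigma_R (1, v_R) for a global index R \<in> Z;
  for R = r + t k (0 \<le> r < k) these are exactly a_r^t, b_r^t.\<close>
definition pa :: "nat \<Rightarrow> (nat \<Rightarrow> real) \<Rightarrow> (nat \<Rightarrow> real) \<Rightarrow> int \<Rightarrow> real \<times> real" where
  "pa k rho u R = (sig k rho R, sig k rho R * ext0 k u R)"

definition pb :: "nat \<Rightarrow> (nat \<Rightarrow> real) \<Rightarrow> (nat \<Rightarrow> real) \<Rightarrow> int \<Rightarrow> real \<times> real" where
  "pb k rho v R = (sig k rho R, sig k rho R * ext0 k v R)"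

definition Ggraph :: "nat \<Rightarrow> nat \<Rightarrow> (nat \<Rightarrow> real) \<Rightarrow> (nat \<Rightarrow> real) \<Rightarrow> (nat \<Rightarrow> real) \<Rightarrow> (real \<times> real) set" where
  "Ggraph l m rho u v = (let k = lcm l m in
     {0} \<union> (\<Union>R. closed_segment (pa k rho u R) (pb k rho v (R + int l))
                 \<union> closed_segment (pb k rho v R) (pa k rho u (R + int m))))"

definition segval :: "real \<times> real \<Rightarrow> real \<times> real \<Rightarrow> real \<Rightarrow> real" where
  "segval p q x = snd p + (x - fst p) * (snd q - snd p) / (fst q - fst p)"

text \<open>The functions P_1 \<le> ... \<le> P_n whose graphs make up G: for q > 0 with
  sigma_s \<le> q < sigma_{s+1}, the segments above q are A_R (s-l < R \<le> s) and
  B_R (s-m < R \<le> s); P_i(q) is the i-th smallest of these n values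
  (counted with multiplicity).\<close>
definition Pfun :: "nat \<Rightarrow> nat \<Rightarrow> (nat \<Rightarrow> real) \<Rightarrow> (nat \<Rightarrow> real) \<Rightarrow> (nat \<Rightarrow> real)
                    \<Rightarrow> nat \<Rightarrow> real \<Rightarrow> real" where
  "Pfun l m rho u v i q = (let k = lcm l m in
     if q \<le> 0 then 0 else
     (let s = (THE s::int. sig k rho s \<le> q \<and> q < sig k rho (s + 1)) in
       sort (map (\<lambda>R. segval (pa k rho u R) (pb k rho v (R + int l)) q) [s - int l + 1..s]
           @ map (\<lambda>R. segval (pb k rho v R) (pa k rho u (R + int m)) q) [s - int m + 1..s])
       ! (i - 1)))"

definition proper_system :: "nat \<Rightarrow> (nat \<Rightarrow> real \<Rightarrow> real) \<Rightarrow> bool" where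
  "proper_system n P \<longleftrightarrow>
     (\<forall>q>0. \<forall>i. 1 \<le> i \<and> i < n \<and> P i q < P (Suc i) q \<longrightarrow>
        (\<exists>dl dr. (\<forall>j\<in>{1..i}. (P j has_real_derivative dl j) (at q within {..q})
                            \<and> (P j has_real_derivative dr j) (at q within {q..}))
                 \<and> (\<Sum>j=1..i. dl j) \<le> (\<Sum>j=1..i. dr j)))"

end

theory Submission
  imports Defs
begin


datatype lp = LP real real

fun lpa :: "lp \<Rightarrow> real" where "lpa (LP a d) = a"
fun lpd :: "lp \<Rightarrow> real" where "lpd (LP a d) = d"

instantiation lp :: linorder
begin
definition less_eq_lp :: "lp \<Rightarrow> lp \<Rightarrow> bool" where
  "less_eq_lp p q \<longleftrightarrow> lpa p < lpa q \<or> (lpa p = lpa q \<and> lpd p \<le> lpd q)"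
definition less_lp :: "lp \<Rightarrow> lp \<Rightarrow> bool" where
  "less_lp p q \<longleftrightarrow> lpa p < lpa q \<or> (lpa p = lpa q \<and> lpd p < lpd q)"
instance
proof
  fix x y z :: lp
  show "(x < y) = (x \<le> y \<and> \<not> y \<le> x)" unfolding less_eq_lp_def less_lp_def by auto
  show "x \<le> x" unfolding less_eq_lp_def by auto
  show "x \<le> y \<Longrightarrow> y \<le> z \<Longrightarrow> x \<le> z" unfolding less_eq_lp_def by auto
  show "x \<le> y \<Longrightarrow> y \<le> x \<Longrightarrow> x = y" unfolding less_eq_lp_def
    by (cases x; cases y) auto
  show "x \<le> y \<or> y \<le> x" unfolding less_eq_lp_def by auto
qed
end

definition ev :: "lp \<Rightarrow> real \<Rightarrow> real" where "ev p h = lpa p + lpd p * h"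

lemma sort_map_mono:
  fixes f :: "'a::linorder \<Rightarrow> 'b::linorder"
  assumes "\<forall>x\<in>set xs. \<forall>y\<in>set xs. x \<le> y \<longrightarrow> f x \<le> f y"
  shows "sort (map f xs) = map f (sort xs)"
proof (rule properties_for_sort)
  show "mset (map f (sort xs)) = mset (map f xs)" by simp
  have "sorted_wrt (\<le>) (sort xs)" using sorted_sort[of xs] by simp
  hence "sorted_wrt (\<lambda>x y. f x \<le> f y) (sort xs)"
    by (rule sorted_wrt_mono_rel[rotated]) (use assms in auto)
  thus "sorted (map f (sort xs))" by (simp add: sorted_map)
qed

lemma pair_right:
  assumes "p \<le> p'"
  shows "\<exists>b>0. \<forall>h. 0 \<le> h \<and> h < b \<longrightarrow> ev p h \<le> ev p' h"
proof (cases "lpa p < lpa p'")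
  case True
  define b where "b = (lpa p' - lpa p) / (\<bar>lpd p\<bar> + \<bar>lpd p'\<bar> + 1)"
  have bpos: "b > 0" using True unfolding b_def by (auto intro!: divide_pos_pos)
  show ?thesis
  proof (intro exI[of _ b] conjI allI impI bpos)
    fix h assume h: "0 \<le> h \<and> h < b"
    have "(lpd p - lpd p') * h \<le> (\<bar>lpd p\<bar> + \<bar>lpd p'\<bar> + 1) * h"
      using h by (intro mult_right_mono) auto
    also have "\<dots> \<le> (\<bar>lpd p\<bar> + \<bar>lpd p'\<bar> + 1) * b"
      using h by (intro mult_left_mono) auto
    also have "\<dots> = lpa p' - lpa p" unfolding b_def by (simp add: add_pos_nonneg)
    finally show "ev p h \<le> ev p' h" unfolding ev_def by (simp add: algebra_simps)
  qed
next
  case False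
  with assms have "lpa p = lpa p'" "lpd p \<le> lpd p'" unfolding less_eq_lp_def by auto
  thus ?thesis unfolding ev_def by (intro exI[of _ 1]) (auto intro: mult_right_mono)
qed

lemma sort_lines:
  "\<exists>b>0. \<forall>h. 0 \<le> h \<and> h < b \<longrightarrow> sort (map (\<lambda>p. ev p h) ps) = map (\<lambda>p. ev p h) (sort ps)"
proof -
  have "\<forall>pp\<in>set ps \<times> set ps. \<exists>b>0. \<forall>h. 0 \<le> h \<and> h < b \<longrightarrow> (fst pp \<le> snd pp \<longrightarrow> ev (fst pp) h \<le> ev (snd pp) h)"
    using pair_right by (metis zero_less_one)
  hence "\<forall>pp\<in>set ps \<times> set ps. eventually (\<lambda>h. h \<ge> 0 \<longrightarrow> (fst pp \<le> snd pp \<longrightarrow> ev (fst pp) h \<le> ev (snd pp) h)) (at_right 0)"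
    unfolding eventually_at_right_field by (metis less_imp_le)
  hence "eventually (\<lambda>h. \<forall>pp\<in>set ps \<times> set ps. h \<ge> 0 \<longrightarrow> (fst pp \<le> snd pp \<longrightarrow> ev (fst pp) h \<le> ev (snd pp) h)) (at_right 0)"
    by (subst eventually_ball_finite_distrib) auto
  then obtain b where b: "b > 0" "\<And>h. h > 0 \<Longrightarrow> h < b \<Longrightarrow> \<forall>pp\<in>set ps \<times> set ps. (fst pp \<le> snd pp \<longrightarrow> ev (fst pp) h \<le> ev (snd pp) h)"
    unfolding eventually_at_right_field by auto
  have z: "\<forall>pp\<in>set ps \<times> set ps. (fst pp \<le> snd pp \<longrightarrow> ev (fst pp) 0 \<le> ev (snd pp) 0)"
    by (auto simp: ev_def less_eq_lp_def)
  show ?thesis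
  proof (intro exI[of _ b] conjI allI impI b(1))
    fix h :: real assume h: "0 \<le> h \<and> h < b"
    hence "\<forall>pp\<in>set ps \<times> set ps. (fst pp \<le> snd pp \<longrightarrow> ev (fst pp) h \<le> ev (snd pp) h)"
      using b(2)[of h] z by (cases "h = 0") auto
    thus "sort (map (\<lambda>p. ev p h) ps) = map (\<lambda>p. ev p h) (sort ps)"
      by (intro sort_map_mono) auto
  qed
qed


lemma ext1_period: "int p dvd d \<Longrightarrow> ext1 p f (r + d) = ext1 p f r"
proof -
  assume "int p dvd d"
  then obtain c where c: "d = int p * c" by (auto elim: dvdE)
  have "r + d - 1 = (r - 1) + c * int p" using c by simp
  hence "(r + d - 1) mod int p = (r - 1) mod int p" by (simp only: mod_mult_self1)
  thus ?thesis unfolding ext1_def by simp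
qed

lemma ext0_period: "int p dvd d \<Longrightarrow> ext0 p f (r + d) = ext0 p f r"
proof -
  assume "int p dvd d"
  then obtain c where c: "d = int p * c" by (auto elim: dvdE)
  have "r + d = r + c * int p" using c by simp
  hence "(r + d) mod int p = r mod int p" by (simp only: mod_mult_self1)
  thus ?thesis unfolding ext0_def by simp
qed

lemma ext1_idx: "p > 0 \<Longrightarrow> nat ((r - 1) mod int p) + 1 \<in> {1..p}"
proof -
  assume p: "p > 0"
  have "(r - 1) mod int p < int p" "0 \<le> (r - 1) mod int p" using p by auto
  thus ?thesis by auto
qed

lemma ext1_in: "p > 0 \<Longrightarrow> ext1 p f r \<in> f ` {1..p}"
  unfolding ext1_def using ext1_idx by blast

lemma prod_gt1: "(\<forall>j\<in>{1..s::nat}. (f j::real) > 1) \<Longrightarrow> s \<ge> 1 \<Longrightarrow> (\<Prod>j=1..s. f j) > 1"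
proof (induction s)
  case 0 then show ?case by simp
next
  case (Suc s)
  show ?case
  proof (cases "s = 0")
    case True then show ?thesis using Suc by simp
  next
    case False
    hence "(\<Prod>j=1..s. f j) > 1" using Suc by auto
    moreover have "f (Suc s) > 1" using Suc by auto
    ultimately show ?thesis by (simp add: prod.nat_ivl_Suc' less_1_mult)
  qed
qed

locale setting =
  fixes l m k :: nat and rho :: "nat \<Rightarrow> real"
  assumes lpos: "l > 0" and mpos: "m > 0" and kdef: "k = lcm l m"
    and rho_gt1: "\<forall>h\<in>{1..k}. rho h > 1"
begin

lemma kpos: "k > 0" using lpos mpos kdef by (simp add: lcm_pos_nat)
lemma ldvd: "int l dvd int k" using kdef by simp
lemma mdvd: "int m dvd int k" using kdef by simp

abbreviation "S \<equiv> sig k rho"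
abbreviation "T \<equiv> tau k rho"

lemma tau_gt1: "T > 1" unfolding tau_def using rho_gt1 kpos by (intro prod_gt1) auto
lemma prod_pos: "j \<le> k \<Longrightarrow> (\<Prod>h=1..j. rho h) > 0"
  using rho_gt1 by (intro prod_pos) (metis atLeastAtMost_iff le_trans less_trans zero_less_one)

lemma ext1_rho_gt1: "ext1 k rho r > 1"
  using ext1_in[OF kpos, of rho r] rho_gt1 by auto

lemma sig_decomp: "j < k \<Longrightarrow> S (int k * t + int j) = T powi t * (\<Prod>h=1..j. rho h)"
proof -
  assume j: "j < k"
  have "(int k * t + int j) div int k = t" "(int k * t + int j) mod int k = int j"
    using j kpos by (simp_all add: div_add1_eq)
  thus ?thesis unfolding sig_def by simp
qed

lemma sig_shift: "S (R + int k * t) = T powi t * S R"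
proof -
  have "(R + int k * t) div int k = R div int k + t" "(R + int k * t) mod int k = R mod int k"
    using kpos by simp_all
  moreover have "T \<noteq> 0" using tau_gt1 by simp
  ultimately show ?thesis unfolding sig_def by (simp add: power_int_add)
qed

lemma sig_pos: "S R > 0"
proof -
  have "nat (R mod int k) \<le> k" using kpos by (simp add: nat_le_iff order_less_imp_le)
  thus ?thesis unfolding sig_def using tau_gt1 prod_pos by auto
qed

lemma sig_Suc: "S (R + 1) = ext1 k rho (R + 1) * S R"
proof -
  define t where "t = R div int k"
  define j where "j = nat (R mod int k)"
  have j: "j < k" unfolding j_def using kpos by (simp add: nat_less_iff)
  have R: "R = int k * t + int j" unfolding t_def j_def using kpos by simp
  have e: "ext1 k rho (R + 1) = rho (j + 1)" unfolding ext1_def j_def by simp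
  show ?thesis
  proof (cases "j + 1 < k")
    case True
    have "S (R + 1) = S (int k * t + int (j + 1))" using R by (simp add: ac_simps)
    also have "\<dots> = T powi t * (\<Prod>h=1..j+1. rho h)" using True sig_decomp by blast
    also have "\<dots> = rho (j+1) * (T powi t * (\<Prod>h=1..j. rho h))"
      by (simp add: prod.nat_ivl_Suc')
    also have "\<dots> = ext1 k rho (R + 1) * S R" using e R sig_decomp[OF j] by simp
    finally show ?thesis .
  next
    case False
    hence jk: "j + 1 = k" using j by simp
    have "R + 1 = int k * (t + 1) + int 0" using R by (simp add: jk[symmetric] algebra_simps)
    hence "S (R + 1) = S (int k * (t + 1) + int 0)" by simp
    also have "\<dots> = T powi (t + 1)" using sig_decomp[of 0 "t+1"] kpos by simp
    also have "\<dots> = T powi t * T" using tau_gt1 by (simp add: power_int_add)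
    also have "T powi t * T = ext1 k rho (R + 1) * S R"
    proof -
      have Teq: "T = (\<Prod>h=1..j. rho h) * rho (j + 1)" unfolding tau_def using jk[symmetric]
        by (simp add: prod.nat_ivl_Suc')
      show ?thesis using e R sig_decomp[OF j] by (subst (2) Teq) simp
    qed
    finally show ?thesis .
  qed
qed

lemma sig_psi: "S (R + int s) = psi k rho R s * S R"
proof (induction s)
  case 0 then show ?case by (simp add: psi_def)
next
  case (Suc s)
  have "S (R + int (Suc s)) = S ((R + int s) + 1)" by (simp add: algebra_simps)
  also have "\<dots> = ext1 k rho (R + int s + 1) * S (R + int s)" by (rule sig_Suc)
  also have "\<dots> = psi k rho R (Suc s) * S R" using Suc
    by (simp add: psi_def prod.nat_ivl_Suc' algebra_simps)
  finally show ?case .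
qed

lemma psi_ge1: "psi k rho R s \<ge> 1"
  unfolding psi_def using ext1_rho_gt1 by (intro prod_ge_1) (auto intro: less_imp_le)

lemma psi_gt1: "s \<ge> 1 \<Longrightarrow> psi k rho R s > 1"
  unfolding psi_def using ext1_rho_gt1 by (intro prod_gt1) auto

lemma psi_period: "psi k rho (R + int k * t) s = psi k rho R s"
proof -
  have "ext1 k rho (R + int k * t + int j) = ext1 k rho (R + int j)" for j
    using ext1_period[of k "int k * t" rho "R + int j"] by (simp add: algebra_simps)
  thus ?thesis unfolding psi_def by simp
qed

lemma sig_less: "a < b \<Longrightarrow> S a < S b"
proof -
  assume ab: "a < b"
  define s where "s = nat (b - a)"
  have b: "b = a + int s" "s \<ge> 1" using ab unfolding s_def by auto
  show ?thesis using sig_psi[of a s] psi_gt1[OF b(2), of a] sig_pos[of a] b(1) by simp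
qed

lemma sig_le: "a \<le> b \<Longrightarrow> S a \<le> S b"
  using sig_less by (cases "a = b") (auto intro: less_imp_le)

end


locale setting2 = setting +
  fixes alpha beta u v :: "nat \<Rightarrow> real"
  assumes slopeA: "\<forall>r<k. (sig k rho (int r + int l) * ext0 k v (int r + int l)
                          - sig k rho (int r) * u r)
                        / (sig k rho (int r + int l) - sig k rho (int r))
                      = ext1 l alpha (int r + 1)"
    and slopeB: "\<forall>r<k. (sig k rho (int r + int m) * ext0 k u (int r + int m)
                          - sig k rho (int r) * v r)
                        / (sig k rho (int r + int m) - sig k rho (int r))
                      = - ext1 m beta (int r + 1)"
begin

abbreviation "al \<equiv> ext1 l alpha"
abbreviation "be \<equiv> ext1 m beta"
definition "X R = S R * ext0 k u R"
definition "Y R = S R * ext0 k v R"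

lemma decompR: obtains r t where "r < k" "R = int r + int k * t"
proof -
  have "nat (R mod int k) < k" using kpos by (simp add: nat_less_iff)
  moreover have "R = int (nat (R mod int k)) + int k * (R div int k)" using kpos by simp
  ultimately show thesis using that by blast
qed

lemma ext0_nat: "r < k \<Longrightarrow> ext0 k f (int r) = f r"
  unfolding ext0_def by simp

lemma X_shift: "X (R + int k * t) = T powi t * X R"
  unfolding X_def using sig_shift ext0_period[of k "int k * t"] by simp
lemma Y_shift: "Y (R + int k * t) = T powi t * Y R"
  unfolding Y_def using sig_shift ext0_period[of k "int k * t"] by simp

lemma relA: "Y (R + int l) - X R = al (R + 1) * (S (R + int l) - S R)"
proof -
  obtain r t where r: "r < k" "R = int r + int k * t" by (rule decompR)
  have D: "S (int r + int l) - S (int r) > 0" using sig_less[of "int r" "int r + int l"] lpos by simp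
  have h: "Y (int r + int l) - X (int r) = al (int r + 1) * (S (int r + int l) - S (int r))"
    using slopeA r(1) D unfolding X_def Y_def by (auto simp: ext0_nat field_simps)
  have "Y (R + int l) = T powi t * Y (int r + int l)"
    using Y_shift[of "int r + int l" t] r(2) by (simp add: ac_simps)
  moreover have "X R = T powi t * X (int r)" using X_shift r(2) by simp
  moreover have "S (R + int l) = T powi t * S (int r + int l)"
    using sig_shift[of "int r + int l" t] r(2) by (simp add: ac_simps)
  moreover have "S R = T powi t * S (int r)" using sig_shift r(2) by simp
  moreover have "al (R + 1) = al (int r + 1)"
    using ext1_period[of l "int k * t" alpha "int r + 1"] ldvd r(2) by (simp add: ac_simps)
  ultimately have "Y (R + int l) - X R = T powi t * (Y (int r + int l) - X (int r))"
    "al (R + 1) * (S (R + int l) - S R) = T powi t * (al (int r + 1) * (S (int r + int l) - S (int r)))"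
    by (simp_all add: algebra_simps)
  with h show ?thesis by simp
qed

lemma relB: "X (R + int m) - Y R = - be (R + 1) * (S (R + int m) - S R)"
proof -
  obtain r t where r: "r < k" "R = int r + int k * t" by (rule decompR)
  have D: "S (int r + int m) - S (int r) > 0" using sig_less[of "int r" "int r + int m"] mpos by simp
  have h: "X (int r + int m) - Y (int r) = - be (int r + 1) * (S (int r + int m) - S (int r))"
    using slopeB r(1) D unfolding X_def Y_def by (auto simp: ext0_nat field_simps)
  have "X (R + int m) = T powi t * X (int r + int m)"
    using X_shift[of "int r + int m" t] r(2) by (simp add: ac_simps)
  moreover have "Y R = T powi t * Y (int r)" using Y_shift r(2) by simp
  moreover have "S (R + int m) = T powi t * S (int r + int m)"
    using sig_shift[of "int r + int m" t] r(2) by (simp add: ac_simps)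
  moreover have "S R = T powi t * S (int r)" using sig_shift r(2) by simp
  moreover have "be (R + 1) = be (int r + 1)"
    using ext1_period[of m "int k * t" beta "int r + 1"] mdvd r(2) by (simp add: ac_simps)
  ultimately have "X (R + int m) - Y R = T powi t * (X (int r + int m) - Y (int r))"
    "- be (R + 1) * (S (R + int m) - S R) = T powi t * (- be (int r + 1) * (S (int r + int m) - S (int r)))"
    by (simp_all add: algebra_simps)
  with h show ?thesis by simp
qed

end


definition "Wset alpha beta l m = {alpha i + beta j | i j. i \<in> {1..l} \<and> j \<in> {1..m}}"

locale setting3 = setting2 +
  assumes omega_pos: "Min (Wset alpha beta l m) > 0"
    and cond: "\<forall>r<k. (psi k rho (int r) (l+m) + 1) / (psi k rho (int r) l + psi k rho (int r) m)
                 \<ge> Max (Wset alpha beta l m) / Min (Wset alpha beta l m)"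
begin

abbreviation "W \<equiv> Wset alpha beta l m"
abbreviation "Om \<equiv> Max W"
abbreviation "om \<equiv> Min W"

lemma W_fin: "finite W" unfolding Wset_def by (intro finite_image_set2) auto

lemma W_mem: "al R + be R' \<in> W"
proof -
  obtain i where i: "i \<in> {1..l}" "al R = alpha i" using ext1_in[OF lpos, of alpha R] by auto
  obtain j where j: "j \<in> {1..m}" "be R' = beta j" using ext1_in[OF mpos, of beta R'] by auto
  show ?thesis unfolding Wset_def using i j by auto
qed

lemma W_bounds: "om \<le> al R + be R'" "al R + be R' \<le> Om"
  using W_mem W_fin by (auto intro: Min_le Max_ge)

definition "dd R = Y R - X R"

lemma cond_R: "om * (psi k rho R (l+m) + 1) \<ge> Om * (psi k rho R l + psi k rho R m)"
proof -
  obtain r t where r: "r < k" "R = int r + int k * t" by (rule decompR)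
  have c: "Om / om \<le> (psi k rho R (l+m) + 1) / (psi k rho R l + psi k rho R m)"
    using cond r psi_period by auto
  have p: "psi k rho R l + psi k rho R m > 0" using psi_ge1[of R l] psi_ge1[of R m] by simp
  from c omega_pos p show ?thesis by (simp add: divide_le_eq le_divide_eq field_simps)
qed

lemma dd_step: "dd (R + int (l + m)) \<ge> dd R"
proof -
  define s0 where "s0 = S R"
  define pl where "pl = psi k rho R l"
  define pm where "pm = psi k rho R m"
  define pn where "pn = psi k rho R (l+m)"
  define a where "a = al (R + 1)"
  define a' where "a' = al (R + int m + 1)"
  define b where "b = be (R + 1)"
  define b' where "b' = be (R + int l + 1)"
  have e1: "R + int m + int l = R + int (l+m)" "R + int l + int m = R + int (l+m)" by simp_all
  have A1: "Y (R + int l) - X R = a * (pl * s0 - s0)"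
    using relA[of R] sig_psi[of R l] unfolding a_def pl_def s0_def by simp
  have A2: "Y (R + int (l+m)) - X (R + int m) = a' * (pn * s0 - pm * s0)"
    using relA[of "R + int m"] sig_psi[of R m] sig_psi[of R "l+m"] e1
    unfolding a'_def pm_def pn_def s0_def by simp
  have B1: "X (R + int m) - Y R = - b * (pm * s0 - s0)"
    using relB[of R] sig_psi[of R m] unfolding b_def pm_def s0_def by simp
  have B2: "X (R + int (l+m)) - Y (R + int l) = - b' * (pn * s0 - pl * s0)"
    using relB[of "R + int l"] sig_psi[of R l] sig_psi[of R "l+m"] e1
    unfolding b'_def pl_def pn_def s0_def by simp
  have E: "dd (R + int (l + m)) - dd R
      = s0 * ((a' + b') * pn + (a + b) - (a' + b) * pm - (a + b') * pl)"
    unfolding dd_def using A1 A2 B1 B2 by (simp add: algebra_simps)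
  have pge: "pl \<ge> 0" "pm \<ge> 0" "pn \<ge> 0" unfolding pl_def pm_def pn_def
    using psi_ge1 by (auto intro: order_trans[OF zero_le_one])
  have "om * pn \<le> (a' + b') * pn" using W_bounds pge unfolding a'_def b'_def by (intro mult_right_mono) auto
  moreover have "om \<le> a + b" using W_bounds unfolding a_def b_def by auto
  moreover have "(a' + b) * pm \<le> Om * pm" using W_bounds pge unfolding a'_def b_def by (intro mult_right_mono) auto
  moreover have "(a + b') * pl \<le> Om * pl" using W_bounds pge unfolding a_def b'_def by (intro mult_right_mono) auto
  moreover have "om * (pn + 1) \<ge> Om * (pl + pm)" using cond_R unfolding pl_def pm_def pn_def .
  ultimately have "(a' + b') * pn + (a + b) - (a' + b) * pm - (a + b') * pl \<ge> 0"
    by (simp add: algebra_simps)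
  moreover have "s0 > 0" unfolding s0_def by (rule sig_pos)
  ultimately show ?thesis using E by (smt (verit) mult_nonneg_nonneg)
qed

lemma dd_iter: "dd (R + int (l + m) * int j) \<ge> dd R"
proof (induction j)
  case 0 then show ?case by simp
next
  case (Suc j)
  have "dd (R + int (l + m) * int (Suc j)) = dd ((R + int (l + m) * int j) + int (l + m))"
    by (simp add: algebra_simps)
  also have "\<dots> \<ge> dd (R + int (l + m) * int j)" by (rule dd_step)
  finally show ?case using Suc by simp
qed

lemma dd_nonneg: "dd R \<ge> 0"
proof -
  have "dd (R + int k * int (l + m)) = T powi int (l+m) * dd R"
    unfolding dd_def using X_shift[of R "int (l+m)"] Y_shift[of R "int (l+m)"] by (simp add: algebra_simps)
  moreover have "dd (R + int k * int (l + m)) \<ge> dd R" using dd_iter[of R k] by (simp add: ac_simps)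
  moreover have "T powi int (l+m) > 1"
  proof -
    have "T powi int (l+m) = T ^ (l+m)" by (rule power_int_of_nat)
    thus ?thesis using tau_gt1 lpos by (simp add: one_less_power)
  qed
  ultimately have "(T powi int (l+m) - 1) * dd R \<ge> 0" by (simp add: algebra_simps)
  moreover have "T powi int (l+m) - 1 > 0" using \<open>T powi int (l+m) > 1\<close> by simp
  ultimately show ?thesis by (simp add: zero_le_mult_iff)
qed

lemma uv_all: "ext0 k u R \<le> ext0 k v R"
  using dd_nonneg[of R] sig_pos[of R] unfolding dd_def X_def Y_def
  by (simp add: algebra_simps mult_le_cancel_left_pos flip: right_diff_distrib)

lemma part1: "\<forall>r<k. u r \<le> v r"
  using uv_all ext0_nat by metis

end


context setting2 begin

lemma sig0: "S 0 = 1" unfolding sig_def by simp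

lemma sig_kt: "S (int k * t) = T powi t" using sig_shift[of 0 t] sig0 by simp

lemma exist_s: "x > 0 \<Longrightarrow> \<exists>s. S s \<le> x \<and> x < S (s + 1)"
proof -
  assume x: "x > 0"
  obtain N1 where N1: "1 / x < T ^ N1" using real_arch_pow[OF tau_gt1] by blast
  obtain N2 where N2: "x < T ^ N2" using real_arch_pow[OF tau_gt1] by blast
  define lo where "lo = int k * (- int N1)"
  define hi where "hi = int k * int N2"
  have Slo: "S lo \<le> x"
  proof -
    have "S lo = inverse (T ^ N1)" unfolding lo_def sig_kt by (simp add: power_int_minus)
    also have "\<dots> \<le> x" using N1 x tau_gt1
      by (simp add: divide_less_eq field_simps)
    finally show ?thesis .
  qed
  have Shi: "x < S hi" unfolding hi_def sig_kt using N2 by (simp add: power_int_of_nat)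
  define A where "A = {s. lo \<le> s \<and> s \<le> hi \<and> S s \<le> x}"
  have finA: "finite A" unfolding A_def by (rule finite_subset[of _ "{lo..hi}"]) auto
  have "lo \<le> hi"
  proof (rule ccontr)
    assume "\<not> lo \<le> hi"
    thus False using Slo Shi sig_le[of hi lo] by simp
  qed
  hence loA: "lo \<in> A" unfolding A_def using Slo by auto
  define s where "s = Max A"
  have sA: "s \<in> A" unfolding s_def using finA loA by (intro Max_in) auto
  have "x < S (s + 1)"
  proof (rule ccontr)
    assume "\<not> x < S (s + 1)"
    hence le: "S (s + 1) \<le> x" by simp
    have "s + 1 \<le> hi"
    proof (rule ccontr)
      assume "\<not> s + 1 \<le> hi"
      hence "s = hi" using sA unfolding A_def by auto
      thus False using sA Shi unfolding A_def by auto
    qed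
    hence "s + 1 \<in> A" using sA le unfolding A_def by auto
    hence "s + 1 \<le> s" unfolding s_def using finA by (intro Max_ge) auto
    thus False by simp
  qed
  thus ?thesis using sA unfolding A_def by auto
qed

lemma the_s: "S s \<le> x \<Longrightarrow> x < S (s + 1) \<Longrightarrow> (THE s. S s \<le> x \<and> x < S (s + 1)) = s"
proof (rule the_equality)
  fix s' assume a: "S s \<le> x" "x < S (s + 1)" and b: "S s' \<le> x \<and> x < S (s' + 1)"
  show "s' = s"
  proof (rule ccontr)
    assume "s' \<noteq> s"
    hence "s' + 1 \<le> s \<or> s + 1 \<le> s'" by auto
    thus False using a b sig_le[of "s'+1" s] sig_le[of "s+1" s'] by auto
  qed
qed auto

definition "lineA R = (pa k rho u R, pb k rho v (R + int l))"
definition "lineB R = (pb k rho v R, pa k rho u (R + int m))"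
definition "fam s = map lineA [s - int l + 1..s] @ map lineB [s - int m + 1..s]"
definition "sv g x = segval (fst g) (snd g) x"

lemma length_fam: "length (fam s) = l + m"
  unfolding fam_def by simp

lemma Pfun_eq:
  assumes "S s \<le> x" "x < S (s + 1)"
  shows "Pfun l m rho u v i x = sort (map (\<lambda>g. sv g x) (fam s)) ! (i - 1)"
proof -
  have "x > 0" using sig_pos[of s] assms by simp
  thus ?thesis unfolding Pfun_def Let_def kdef[symmetric] the_s[OF assms]
    by (simp add: fam_def sv_def lineA_def lineB_def o_def)
qed

end


definition "slope g = (snd (snd g) - snd (fst g)) / (fst (snd g) - fst (fst g))"
definition "keyq q g = LP (segval (fst g) (snd g) q) (slope g)"
definition "flipk p = LP (lpa p) (- lpd p)"
definition "FF c M = sum_mset (image_mset lpd (filter_mset (\<lambda>p. lpa p \<le> c) M))"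

lemma lin_aux: "(b::real) + (x - a) * (d - b) / (c - a) = (b + (q - a) * (d - b) / (c - a)) + (d - b) / (c - a) * (x - q)"
proof -
  have "(x - a) * (d - b) / (c - a) = ((q - a) + (x - q)) * ((d - b) / (c - a))" by simp
  thus ?thesis by (simp only: distrib_right) (simp add: algebra_simps)
qed

lemma segval_key: "segval (fst g) (snd g) x = ev (keyq q g) (x - q)"
  unfolding keyq_def ev_def segval_def slope_def using lin_aux by simp

lemma ev_flip: "ev (flipk p) h = ev p (- h)"
  unfolding ev_def flipk_def by simp

lemma FF_flip: "FF c (image_mset flipk M) = - FF c M"
  unfolding FF_def by (induction M) (auto simp: flipk_def)

lemma lpa_mono: "p \<le> p' \<Longrightarrow> lpa p \<le> lpa p'"
  unfolding less_eq_lp_def by auto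

lemma sorted_first_sum:
  fixes ps :: "lp list"
  assumes srt: "sorted ps" and i: "0 < i" "i < length ps" and gap: "lpa (ps ! (i - 1)) < lpa (ps ! i)"
  shows "(\<Sum>j<i. lpd (ps ! j)) = FF (lpa (ps ! (i - 1))) (mset ps)"
proof -
  define c where "c = lpa (ps ! (i - 1))"
  have srt': "\<And>a b. a \<le> b \<Longrightarrow> b < length ps \<Longrightarrow> lpa (ps ! a) \<le> lpa (ps ! b)"
    using srt by (intro lpa_mono sorted_nth_mono) auto
  have t: "filter (\<lambda>p. lpa p \<le> c) (take i ps) = take i ps"
  proof (rule filter_True, intro ballI)
    fix x assume "x \<in> set (take i ps)"
    then obtain j where "j < length (take i ps)" "x = take i ps ! j" by (auto simp: in_set_conv_nth)
    thus "lpa x \<le> c" unfolding c_def using srt'[of j "i - 1"] i by auto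
  qed
  have d: "filter (\<lambda>p. lpa p \<le> c) (drop i ps) = []"
  proof (rule filter_False, intro ballI)
    fix x assume "x \<in> set (drop i ps)"
    then obtain j where "j < length (drop i ps)" "x = drop i ps ! j" by (auto simp: in_set_conv_nth)
    hence "i + j < length ps" "x = ps ! (i + j)" by auto
    thus "\<not> lpa x \<le> c" unfolding c_def using srt'[of i "i + j"] i gap by auto
  qed
  have "filter (\<lambda>p. lpa p \<le> c) ps = take i ps"
    using t d append_take_drop_id[of i ps] by (metis append.right_neutral filter_append)
  hence "FF c (mset ps) = sum_list (map lpd (take i ps))"
    unfolding FF_def by (metis mset_filter mset_map sum_mset_sum_list)
  also have "\<dots> = (\<Sum>j<i. lpd (ps ! j))"
    using i by (simp add: sum_list_sum_nth lessThan_atLeast0)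
  finally show ?thesis unfolding c_def by simp
qed


locale setting4 = setting2 +
  assumes alpha_nn: "\<forall>i\<in>{1..l}. alpha i \<ge> 0"
    and beta_nn: "\<forall>j\<in>{1..m}. beta j \<ge> 0"
    and uv: "\<And>R. ext0 k u R \<le> ext0 k v R"
begin

lemma al_nn: "al R \<ge> 0" using ext1_in[OF lpos, of alpha R] alpha_nn by auto
lemma be_nn: "be R \<ge> 0" using ext1_in[OF mpos, of beta R] beta_nn by auto
lemma XY: "X R \<le> Y R" unfolding X_def Y_def using uv[of R] sig_pos[of R] by simp

lemma pa_eq: "pa k rho u R = (S R, X R)" unfolding pa_def X_def by simp
lemma pb_eq: "pb k rho v R = (S R, Y R)" unfolding pb_def Y_def by simp

lemma slopeA': "slope (lineA R) = al (R + 1)"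
proof -
  have D: "S (R + int l) - S R > 0" using sig_less[of R "R + int l"] lpos by simp
  show ?thesis unfolding slope_def lineA_def pa_eq pb_eq using relA[of R] D by (simp add: field_simps)
qed

lemma slopeB': "slope (lineB R) = - be (R + 1)"
proof -
  have D: "S (R + int m) - S R > 0" using sig_less[of R "R + int m"] mpos by simp
  show ?thesis unfolding slope_def lineB_def pa_eq pb_eq using relB[of R] D by (simp add: field_simps)
qed

lemma keyA_start: "keyq (S R) (lineA R) = LP (X R) (al (R + 1))"
  unfolding keyq_def slopeA' by (simp add: lineA_def pa_eq pb_eq segval_def)
lemma keyB_start: "keyq (S R) (lineB R) = LP (Y R) (- be (R + 1))"
  unfolding keyq_def slopeB' by (simp add: lineB_def pa_eq pb_eq segval_def)
lemma keyA_end: "keyq (S (R + int l)) (lineA R) = LP (Y (R + int l)) (al (R + 1))"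
proof -
  have D: "S (R + int l) - S R \<noteq> 0" using sig_less[of R "R + int l"] lpos by simp
  show ?thesis unfolding keyq_def slopeA' using D by (simp add: lineA_def pa_eq pb_eq segval_def)
qed
lemma keyB_end: "keyq (S (R + int m)) (lineB R) = LP (X (R + int m)) (- be (R + 1))"
proof -
  have D: "S (R + int m) - S R \<noteq> 0" using sig_less[of R "R + int m"] mpos by simp
  show ?thesis unfolding keyq_def slopeB' using D by (simp add: lineB_def pa_eq pb_eq segval_def)
qed

lemma fam_split:
  "mset (fam (s0 - 1)) = mset (map lineA [s0 - int l + 1..s0 - 1] @ map lineB [s0 - int m + 1..s0 - 1])
       + {#lineA (s0 - int l), lineB (s0 - int m)#}"
  "mset (fam s0) = mset (map lineA [s0 - int l + 1..s0 - 1] @ map lineB [s0 - int m + 1..s0 - 1])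
       + {#lineA s0, lineB s0#}"
proof -
  have a1: "[s0 - int l..s0 - 1] = (s0 - int l) # [s0 - int l + 1..s0 - 1]" using lpos by (simp add: upto_rec1)
  have b1: "[s0 - int m..s0 - 1] = (s0 - int m) # [s0 - int m + 1..s0 - 1]" using mpos by (simp add: upto_rec1)
  have a2: "[s0 - int l + 1..s0] = [s0 - int l + 1..s0 - 1] @ [s0]" using lpos by (simp add: upto_rec2)
  have b2: "[s0 - int m + 1..s0] = [s0 - int m + 1..s0 - 1] @ [s0]" using mpos by (simp add: upto_rec2)
  have e: "s0 - 1 - int l + 1 = s0 - int l" "s0 - 1 - int m + 1 = s0 - int m" by simp_all
  show "mset (fam (s0 - 1)) = mset (map lineA [s0 - int l + 1..s0 - 1] @ map lineB [s0 - int m + 1..s0 - 1])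
       + {#lineA (s0 - int l), lineB (s0 - int m)#}"
    unfolding fam_def e a1 b1 by simp
  show "mset (fam s0) = mset (map lineA [s0 - int l + 1..s0 - 1] @ map lineB [s0 - int m + 1..s0 - 1])
       + {#lineA s0, lineB s0#}"
    unfolding fam_def a2 b2 by simp
qed

lemma mset_keys:
  fixes s0 :: int
  defines "q \<equiv> S s0"
  shows "image_mset (keyq q) (mset (fam (s0 - 1))) + {#LP (X s0) (al (s0 + 1)), LP (Y s0) (- be (s0 + 1))#}
       = image_mset (keyq q) (mset (fam s0)) + {#LP (Y s0) (al (s0 + 1)), LP (X s0) (- be (s0 + 1))#}"
proof -
  have kA: "keyq q (lineA (s0 - int l)) = LP (Y s0) (al (s0 + 1))"
    using keyA_end[of "s0 - int l"] ext1_period[of l "int l" alpha "s0 - int l + 1"]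
    unfolding q_def by (simp add: algebra_simps)
  have kB: "keyq q (lineB (s0 - int m)) = LP (X s0) (- be (s0 + 1))"
    using keyB_end[of "s0 - int m"] ext1_period[of m "int m" beta "s0 - int m + 1"]
    unfolding q_def by (simp add: algebra_simps)
  have kA0: "keyq q (lineA s0) = LP (X s0) (al (s0 + 1))" using keyA_start unfolding q_def by simp
  have kB0: "keyq q (lineB s0) = LP (Y s0) (- be (s0 + 1))" using keyB_start unfolding q_def by simp
  show ?thesis using fam_split[of s0] kA kB kA0 kB0 by (simp add: add_mset_commute)
qed

end


lemma FF_plus: "FF c (M + N) = FF c M + FF c N" unfolding FF_def by simp

context setting4 begin

abbreviation "P \<equiv> Pfun l m rho u v"

lemma proper_at:
  assumes q: "q > 0" and i: "1 \<le> i" "i < l + m" and gapP: "P i q < P (Suc i) q"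
  shows "\<exists>dl dr. (\<forall>j\<in>{1..i}. (P j has_real_derivative dl j) (at q within {..q})
                            \<and> (P j has_real_derivative dr j) (at q within {q..}))
                 \<and> (\<Sum>j=1..i. dl j) \<le> (\<Sum>j=1..i. dr j)"
proof -
  obtain s0 where s0: "S s0 \<le> q" "q < S (s0 + 1)" using exist_s[OF q] by blast
  define sL where "sL = (if q = S s0 then s0 - 1 else s0)"
  have sL1: "S sL < q" unfolding sL_def using s0 sig_less[of "s0 - 1" s0] by auto
  have sL2: "q \<le> S (sL + 1)" unfolding sL_def using s0 by auto
  define KR where "KR = map (keyq q) (fam s0)"
  define KL where "KL = map (flipk \<circ> keyq q) (fam sL)"
  define SR where "SR = sort KR"
  define SL where "SL = sort KL"
  have lenR: "length SR = l + m" unfolding SR_def KR_def by (simp add: length_fam)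
  have lenL: "length SL = l + m" unfolding SL_def KL_def by (simp add: length_fam)
  obtain bR where bR: "bR > 0" "\<And>h. 0 \<le> h \<Longrightarrow> h < bR \<Longrightarrow>
      sort (map (\<lambda>p. ev p h) KR) = map (\<lambda>p. ev p h) SR"
    using sort_lines[of KR] unfolding SR_def by blast
  obtain bL where bL: "bL > 0" "\<And>h. 0 \<le> h \<Longrightarrow> h < bL \<Longrightarrow>
      sort (map (\<lambda>p. ev p h) KL) = map (\<lambda>p. ev p h) SL"
    using sort_lines[of KL] unfolding SL_def by blast
  have valsR: "map (\<lambda>g. sv g x) (fam s0) = map (\<lambda>p. ev p (x - q)) KR" for x
    unfolding KR_def sv_def by (simp add: segval_key[of _ _ q])
  have valsL: "map (\<lambda>g. sv g x) (fam sL) = map (\<lambda>p. ev p (q - x)) KL" for x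
    unfolding KL_def sv_def by (simp add: segval_key[of _ _ q] ev_flip)
  define dR where "dR = min bR (S (s0 + 1) - q)"
  define dL where "dL = min bL (q - S sL)"
  have dRpos: "dR > 0" unfolding dR_def using bR s0 by auto
  have dLpos: "dL > 0" unfolding dL_def using bL sL1 by auto
  have PR: "P j x = ev (SR ! (j - 1)) (x - q)"
    if j: "1 \<le> j" "j \<le> l + m" and x: "q \<le> x" "x < q + dR" for j x
  proof -
    have "S s0 \<le> x" "x < S (s0 + 1)" using x s0 unfolding dR_def by auto
    hence "P j x = sort (map (\<lambda>p. ev p (x - q)) KR) ! (j - 1)"
      using Pfun_eq valsR by simp
    also have "\<dots> = map (\<lambda>p. ev p (x - q)) SR ! (j - 1)"
      using bR(2)[of "x - q"] x unfolding dR_def by simp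
    also have "\<dots> = ev (SR ! (j - 1)) (x - q)" using j lenR by simp
    finally show ?thesis .
  qed
  have cont: "sort (map (\<lambda>g. sv g q) (fam sL)) = sort (map (\<lambda>g. sv g q) (fam s0))"
  proof (cases "q = S s0")
    case False thus ?thesis unfolding sL_def by simp
  next
    case True
    have e: "sv g q = lpa (keyq q g)" for g unfolding sv_def keyq_def by simp
    have "image_mset lpa (image_mset (keyq q) (mset (fam (s0 - 1))) + {#LP (X s0) (al (s0 + 1)), LP (Y s0) (- be (s0 + 1))#})
       = image_mset lpa (image_mset (keyq q) (mset (fam s0)) + {#LP (Y s0) (al (s0 + 1)), LP (X s0) (- be (s0 + 1))#})"
      using mset_keys[of s0] True by simp
    hence "mset (map (\<lambda>g. sv g q) (fam sL)) = mset (map (\<lambda>g. sv g q) (fam s0))"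
      using True unfolding sL_def e by (simp add: image_mset.compositionality o_def add_mset_commute)
    thus ?thesis by (metis properties_for_sort sorted_sort mset_sort)
  qed
  have PL: "P j x = ev (SL ! (j - 1)) (q - x)"
    if j: "1 \<le> j" "j \<le> l + m" and x: "q - dL < x" "x \<le> q" for j x
  proof (cases "x = q")
    case True
    have "P j q = sort (map (\<lambda>g. sv g q) (fam s0)) ! (j - 1)" using Pfun_eq s0 by simp
    also have "\<dots> = sort (map (\<lambda>p. ev p 0) KL) ! (j - 1)" using cont valsL[of q] by simp
    also have "\<dots> = map (\<lambda>p. ev p 0) SL ! (j - 1)" using bL by simp
    also have "\<dots> = ev (SL ! (j - 1)) (q - x)" using j lenL True by simp
    finally show ?thesis using True by simp
  next
    case False
    have "S sL \<le> x" "x < S (sL + 1)" using x sL2 False unfolding dL_def by auto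
    hence "P j x = sort (map (\<lambda>p. ev p (q - x)) KL) ! (j - 1)"
      using Pfun_eq valsL by simp
    also have "\<dots> = map (\<lambda>p. ev p (q - x)) SL ! (j - 1)"
      using bL(2)[of "q - x"] x unfolding dL_def by simp
    also have "\<dots> = ev (SL ! (j - 1)) (q - x)" using j lenL by simp
    finally show ?thesis .
  qed
  define dl where "dl j = - lpd (SL ! (j - 1))" for j
  define dr where "dr j = lpd (SR ! (j - 1))" for j
  have derR: "(P j has_real_derivative dr j) (at q within {q..})" if j: "1 \<le> j" "j \<le> l + m" for j
  proof (rule has_field_derivative_transform_within[OF _ dRpos])
    show "((\<lambda>x. ev (SR ! (j - 1)) (x - q)) has_real_derivative dr j) (at q within {q..})"
      unfolding ev_def dr_def by (auto intro!: derivative_eq_intros)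
    show "q \<in> {q..}" by simp
    fix x assume "x \<in> {q..}" "dist x q < dR"
    thus "ev (SR ! (j - 1)) (x - q) = P j x" using PR[OF j, of x] by (simp add: dist_real_def)
  qed
  have derL: "(P j has_real_derivative dl j) (at q within {..q})" if j: "1 \<le> j" "j \<le> l + m" for j
  proof (rule has_field_derivative_transform_within[OF _ dLpos])
    show "((\<lambda>x. ev (SL ! (j - 1)) (q - x)) has_real_derivative dl j) (at q within {..q})"
      unfolding ev_def dl_def by (auto intro!: derivative_eq_intros)
    show "q \<in> {..q}" by simp
    fix x assume "x \<in> {..q}" "dist x q < dL"
    thus "ev (SL ! (j - 1)) (q - x) = P j x" using PL[OF j, of x] by (simp add: dist_real_def)
  qed
  have PRq: "P j q = lpa (SR ! (j - 1))" if "1 \<le> j" "j \<le> l + m" for j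
    using PR[OF that, of q] dRpos by (simp add: ev_def)
  have PLq: "P j q = lpa (SL ! (j - 1))" if "1 \<le> j" "j \<le> l + m" for j
    using PL[OF that, of q] dLpos by (simp add: ev_def)
  define c where "c = P i q"
  have sR: "(\<Sum>j=1..i. dr j) = FF c (mset KR)"
  proof -
    have "(\<Sum>j=1..i. dr j) = (\<Sum>j<i. lpd (SR ! j))"
      unfolding dr_def by (simp add: sum.atLeast1_atMost_eq)
    also have "\<dots> = FF (lpa (SR ! (i - 1))) (mset SR)"
      using i lenR gapP PRq[of i] PRq[of "Suc i"]
      by (intro sorted_first_sum) (auto simp: SR_def)
    also have "\<dots> = FF c (mset KR)" using PRq[of i] i unfolding c_def SR_def by simp
    finally show ?thesis .
  qed
  have sL': "(\<Sum>j=1..i. dl j) = - FF c (mset KL)"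
  proof -
    have "(\<Sum>j=1..i. dl j) = - (\<Sum>j<i. lpd (SL ! j))"
      unfolding dl_def by (simp add: sum.atLeast1_atMost_eq sum_negf)
    also have "(\<Sum>j<i. lpd (SL ! j)) = FF (lpa (SL ! (i - 1))) (mset SL)"
      using i lenL gapP PLq[of i] PLq[of "Suc i"]
      by (intro sorted_first_sum) (auto simp: SL_def)
    also have "\<dots> = FF c (mset KL)" using PLq[of i] i unfolding c_def SL_def by simp
    finally show ?thesis .
  qed
  have mKL: "mset KL = image_mset flipk (image_mset (keyq q) (mset (fam sL)))"
    unfolding KL_def by (simp add: image_mset.compositionality)
  have mKR: "mset KR = image_mset (keyq q) (mset (fam s0))" unfolding KR_def by simp
  have "FF c (image_mset (keyq q) (mset (fam sL))) \<le> FF c (image_mset (keyq q) (mset (fam s0)))"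
  proof (cases "q = S s0")
    case False thus ?thesis unfolding sL_def by simp
  next
    case True
    have "FF c (image_mset (keyq q) (mset (fam sL))) + FF c {#LP (X s0) (al (s0 + 1)), LP (Y s0) (- be (s0 + 1))#}
        = FF c (image_mset (keyq q) (mset (fam s0))) + FF c {#LP (Y s0) (al (s0 + 1)), LP (X s0) (- be (s0 + 1))#}"
      using mset_keys[of s0] True unfolding sL_def by (simp flip: FF_plus)
    moreover have "FF c {#LP (Y s0) (al (s0 + 1)), LP (X s0) (- be (s0 + 1))#}
        \<le> FF c {#LP (X s0) (al (s0 + 1)), LP (Y s0) (- be (s0 + 1))#}"
      using XY[of s0] al_nn[of "s0 + 1"] be_nn[of "s0 + 1"] unfolding FF_def by auto
    ultimately show ?thesis by simp
  qed
  hence "(\<Sum>j=1..i. dl j) \<le> (\<Sum>j=1..i. dr j)" using sR sL' mKL mKR FF_flip by simp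
  thus ?thesis using derL derR i by (intro exI[of _ dl] exI[of _ dr]) auto
qed

end


theorem proposition3p1:
  fixes l m k n :: nat
    and alpha beta rho u v :: "nat \<Rightarrow> real"
  assumes lpos: "l > 0" and mpos: "m > 0"
    and cop: "coprime l m"
    and kdef: "k = lcm l m" and ndef: "n = l + m"
    and alpha_nn: "\<forall>i\<in>{1..l}. alpha i \<ge> 0"
    and beta_nn: "\<forall>j\<in>{1..m}. beta j \<ge> 0"
    and not_all_zero: "(\<exists>i\<in>{1..l}. alpha i \<noteq> 0) \<or> (\<exists>j\<in>{1..m}. beta j \<noteq> 0)"
    and sum_eq: "(\<Sum>i=1..l. alpha i) = (\<Sum>j=1..m. beta j)"
    and rho_gt1: "\<forall>h\<in>{1..k}. rho h > 1"
    and slopeA: "\<forall>r<k. (sig k rho (int r + int l) * ext0 k v (int r + int l)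
                          - sig k rho (int r) * u r)
                        / (sig k rho (int r + int l) - sig k rho (int r))
                      = ext1 l alpha (int r + 1)"
    and slopeB: "\<forall>r<k. (sig k rho (int r + int m) * ext0 k u (int r + int m)
                          - sig k rho (int r) * v r)
                        / (sig k rho (int r + int m) - sig k rho (int r))
                      = - ext1 m beta (int r + 1)"
    and omega_pos: "Min {alpha i + beta j | i j. i \<in> {1..l} \<and> j \<in> {1..m}} > 0"
    and cond: "\<forall>r<k. (psi k rho (int r) n + 1) / (psi k rho (int r) l + psi k rho (int r) m)
                 \<ge> Max {alpha i + beta j | i j. i \<in> {1..l} \<and> j \<in> {1..m}}
                   / Min {alpha i + beta j | i j. i \<in> {1..l} \<and> j \<in> {1..m}}"
  shows "(\<forall>r<k. v r \<ge> u r) \<and> proper_system n (Pfun l m rho u v)"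
  proof -
  have loc1: "setting l m k rho" using lpos mpos kdef rho_gt1 by unfold_locales auto
  have loc2: "setting2 l m k rho alpha beta u v"
    using loc1 slopeA slopeB by (simp add: setting2_def setting2_axioms_def)
  have loc3: "setting3 l m k rho alpha beta u v"
    using loc2 omega_pos cond ndef unfolding setting3_def setting3_axioms_def Wset_def by simp
  have p1: "\<forall>r<k. u r \<le> v r" using setting3.part1[OF loc3] .
  have uvR: "\<And>R. ext0 k u R \<le> ext0 k v R" using setting3.uv_all[OF loc3] .
  have loc4: "setting4 l m k rho alpha beta u v"
    using loc2 alpha_nn beta_nn uvR unfolding setting4_def setting4_axioms_def by simp
  have "proper_system n (Pfun l m rho u v)"
    unfolding proper_system_def ndef using setting4.proper_at[OF loc4] by blast
  thus ?thesis using p1 by simp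
qed

end
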